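(* Let $V\subseteq\mathcal V$ be finite and let $\mathcal E,\mathcal F\in \mathit{DProg}(V)$. Then: (1) $\mathcal E\le_T^e\mathcal F$ if and only if $\mathcal E\sqsubseteq\mathcal F$; (2) $\mathcal E\le_P^e\mathcal F$ if and only if $\mathcal F\sqsubseteq\mathcal E$; (3) $\mathcal E\equiv_T^e\mathcal F$ iff $\mathcal E\equiv_P^e\mathcal F$ iff $\mathcal E=\mathcal F$; (4) if both $\mathcal E$ and $\mathcal F$ are trace-preserving, then $\mathcal E\le_T^e\mathcal F$ iff $\mathcal E\le_P^e\mathcal F$ iff $\mathcal E=\mathcal F$.
   Context: $\mathcal V$ is a countably infinite set of quantum variables, each $q\in\mathcal V$ with state space $\mathcal H_q=\mathbb C^2$; for finite $V\subseteq\mathcal V$, $\mathcal H_V=\bigotimes_{q\in V}\mathcal H_q$ with identity $I_V$. $\mathcal D(\mathcal H)$ denotes partial density operators (positive operators of trace $\le 1$), $\mathcal P(\mathcal H)$ effects (positive operators with eigenvalues in $[0,1]$), and $\sqsubseteq$ the Löwner order on operators ($A\sqsubseteq B$ iff $B-A$ is positive). $\mathit{DProg}(V)$ is the set of completely positive trace-nonincreasing (CPTN) super-operators on $\mathcal L(\mathcal H_V)$; for $\mathcal E,\mathcal F\in\mathit{DProg}(V)$, $\mathcal E\sqsubseteq\mathcal F$ means that $\mathcal F-\mathcal E$ is completely positive. Convention: operators and super-operators on a subsystem are implicitly extended to a larger system by tensoring with the identity operator / identity super-operator. Correctness: for finite $W\subseteq\mathcal V$ and $M,N\in\mathcal P(\mathcal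 H_W)$, $\mathcal E\models_{tot}(M,N)$ means that for every finite $X\supseteq V\cup W$ and every $\rho\in\mathcal D(\mathcal H_X)$, ${\rm tr}(M\rho)\le{\rm tr}(N\mathcal E(\rho))$; $\mathcal E\models_{par}(M,N)$ means that for all such $X,\rho$, ${\rm tr}(M\rho)\le{\rm tr}(N\mathcal E(\rho))+{\rm tr}(\rho)-{\rm tr}(\mathcal E(\rho))$. Refinement: $\mathcal E\le_T^e\mathcal F$ iff for every finite $W\subseteq\mathcal V$ and all $M,N\in\mathcal P(\mathcal H_W)$, $\mathcal E\models_{tot}(M,N)$ implies $\mathcal F\models_{tot}(M,N)$; $\mathcal E\le_P^e\mathcal F$ is defined the same way with $\models_{par}$. $\mathcal E\equiv_T^e\mathcal F$ means $\mathcal E\le_T^e\mathcal F$ and $\mathcal F\le_T^e\mathcal E$; similarly $\equiv_P^e$. *)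

theory Defs
  imports Complex_Main
begin

text \<open>Quantum variables are natural numbers (a countably infinite set), each a qubit.
  The computational basis of H_X (X finite) is indexed by the assignments
  sigma :: nat => bool that are False outside X.  Operators on H_X are matrices
  indexed by such assignments (entries outside are required to be zero).
  This avoids any ordering of tensor factors: extension of an operator to a
  larger register is tensoring with the identity.\<close>

type_synonym asg = "nat \<Rightarrow> bool"
type_synonym op = "asg \<Rightarrow> asg \<Rightarrow> complex"
text \<open>A super-operator on L(H_V) is given by its matrix (kernel) K with
  E(A) s t = sum over s' t' of K s t s' t' * A s' t'.\<close>
type_synonym sop = "asg \<Rightarrow> asg \<Rightarrow> asg \<Rightarrow> asg \<Rightarrow> complex"

definition asgs :: "nat set \<Rightarrow> asg set" where
  "asgs X = {s. \<forall>q. q \<notin> X \<longrightarrow> s q = False}"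

definition restr :: "nat set \<Rightarrow> asg \<Rightarrow> asg" where
  "restr W s = (\<lambda>q. if q \<in> W then s q else False)"

definition agree :: "nat set \<Rightarrow> asg \<Rightarrow> asg \<Rightarrow> bool" where
  "agree R s t \<longleftrightarrow> (\<forall>q\<in>R. s q = t q)"

definition is_op :: "nat set \<Rightarrow> op \<Rightarrow> bool" where
  "is_op X A \<longleftrightarrow> (\<forall>s t. s \<notin> asgs X \<or> t \<notin> asgs X \<longrightarrow> A s t = 0)"

definition idop :: "nat set \<Rightarrow> op" where
  "idop X = (\<lambda>s t. if s \<in> asgs X \<and> s = t then 1 else 0)"

definition opmult :: "nat set \<Rightarrow> op \<Rightarrow> op \<Rightarrow> op" where
  "opmult X A B = (\<lambda>s t. \<Sum>u\<in>asgs X. A s u * B u t)"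

definition tr :: "nat set \<Rightarrow> op \<Rightarrow> complex" where
  "tr X A = (\<Sum>s\<in>asgs X. A s s)"

definition psd :: "nat set \<Rightarrow> op \<Rightarrow> bool" where
  "psd X A \<longleftrightarrow> is_op X A \<and>
     (\<forall>\<psi> :: asg \<Rightarrow> complex.
        Im (\<Sum>s\<in>asgs X. \<Sum>t\<in>asgs X. cnj (\<psi> s) * A s t * \<psi> t) = 0 \<and>
        Re (\<Sum>s\<in>asgs X. \<Sum>t\<in>asgs X. cnj (\<psi> s) * A s t * \<psi> t) \<ge> 0)"

definition is_pdo :: "nat set \<Rightarrow> op \<Rightarrow> bool" where
  "is_pdo X \<rho> \<longleftrightarrow> psd X \<rho> \<and> Re (tr X \<rho>) \<le> 1"

definition is_effect :: "nat set \<Rightarrow> op \<Rightarrow> bool" where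
  "is_effect X M \<longleftrightarrow> psd X M \<and> psd X (\<lambda>s t. idop X s t - M s t)"

text \<open>Extension of an operator A on H_W to H_X (W \<subseteq> X): A \<otimes> I_{X-W}.\<close>
definition ext_op :: "nat set \<Rightarrow> nat set \<Rightarrow> op \<Rightarrow> op" where
  "ext_op W X A = (\<lambda>s t. if s \<in> asgs X \<and> t \<in> asgs X \<and> agree (X - W) s t
                          then A (restr W s) (restr W t) else 0)"

text \<open>Action of the super-operator K on L(H_V), extended to H_X (V \<subseteq> X) by
  tensoring with the identity super-operator on L(H_{X-V}).\<close>
definition apply_sop :: "nat set \<Rightarrow> nat set \<Rightarrow> sop \<Rightarrow> op \<Rightarrow> op" where
  "apply_sop V X K A = (\<lambda>s t. if s \<in> asgs X \<and> t \<in> asgs X then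
      (\<Sum>s'\<in>asgs X. \<Sum>t'\<in>asgs X.
         if agree (X - V) s s' \<and> agree (X - V) t t'
         then K (restr V s) (restr V t) (restr V s') (restr V t') * A s' t' else 0)
    else 0)"

definition is_sop :: "nat set \<Rightarrow> sop \<Rightarrow> bool" where
  "is_sop V K \<longleftrightarrow> (\<forall>a b c d. a \<notin> asgs V \<or> b \<notin> asgs V \<or> c \<notin> asgs V \<or> d \<notin> asgs V
                       \<longrightarrow> K a b c d = 0)"

text \<open>Complete positivity: K \<otimes> id_R maps positive operators to positive operators
  for every reference register R (any finite X \<supseteq> V).\<close>
definition cp :: "nat set \<Rightarrow> sop \<Rightarrow> bool" where
  "cp V K \<longleftrightarrow> (\<forall>X. finite X \<and> V \<subseteq> X \<longrightarrow> (\<forall>A. psd X A \<longrightarrow> psd X (apply_sop V X K A)))"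

definition trace_nonincr :: "nat set \<Rightarrow> sop \<Rightarrow> bool" where
  "trace_nonincr V K \<longleftrightarrow> (\<forall>\<rho>. psd V \<rho> \<longrightarrow> Re (tr V (apply_sop V V K \<rho>)) \<le> Re (tr V \<rho>))"

definition trace_pres :: "nat set \<Rightarrow> sop \<Rightarrow> bool" where
  "trace_pres V K \<longleftrightarrow> (\<forall>\<rho>. psd V \<rho> \<longrightarrow> tr V (apply_sop V V K \<rho>) = tr V \<rho>)"

definition DProg :: "nat set \<Rightarrow> sop set" where
  "DProg V = {K. is_sop V K \<and> cp V K \<and> trace_nonincr V K}"

definition sop_le :: "nat set \<Rightarrow> sop \<Rightarrow> sop \<Rightarrow> bool" where
  "sop_le V E F \<longleftrightarrow> cp V (\<lambda>a b c d. F a b c d - E a b c d)"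

definition models_tot :: "nat set \<Rightarrow> sop \<Rightarrow> nat set \<Rightarrow> op \<Rightarrow> op \<Rightarrow> bool" where
  "models_tot V E W M N \<longleftrightarrow>
    (\<forall>X \<rho>. finite X \<and> V \<union> W \<subseteq> X \<and> is_pdo X \<rho> \<longrightarrow>
       Re (tr X (opmult X (ext_op W X M) \<rho>))
         \<le> Re (tr X (opmult X (ext_op W X N) (apply_sop V X E \<rho>))))"

definition models_par :: "nat set \<Rightarrow> sop \<Rightarrow> nat set \<Rightarrow> op \<Rightarrow> op \<Rightarrow> bool" where
  "models_par V E W M N \<longleftrightarrow>
    (\<forall>X \<rho>. finite X \<and> V \<union> W \<subseteq> X \<and> is_pdo X \<rho> \<longrightarrow>
       Re (tr X (opmult X (ext_op W X M) \<rho>))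
         \<le> Re (tr X (opmult X (ext_op W X N) (apply_sop V X E \<rho>)))
            + Re (tr X \<rho>) - Re (tr X (apply_sop V X E \<rho>)))"

definition ref_T :: "nat set \<Rightarrow> sop \<Rightarrow> sop \<Rightarrow> bool" where
  "ref_T V E F \<longleftrightarrow> (\<forall>W M N. finite W \<and> is_effect W M \<and> is_effect W N \<longrightarrow>
                        models_tot V E W M N \<longrightarrow> models_tot V F W M N)"

definition ref_P :: "nat set \<Rightarrow> sop \<Rightarrow> sop \<Rightarrow> bool" where
  "ref_P V E F \<longleftrightarrow> (\<forall>W M N. finite W \<and> is_effect W M \<and> is_effect W N \<longrightarrow>
                        models_par V E W M N \<longrightarrow> models_par V F W M N)"

definition equiv_T :: "nat set \<Rightarrow> sop \<Rightarrow> sop \<Rightarrow> bool" where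
  "equiv_T V E F \<longleftrightarrow> ref_T V E F \<and> ref_T V F E"

definition equiv_P :: "nat set \<Rightarrow> sop \<Rightarrow> sop \<Rightarrow> bool" where
  "equiv_P V E F \<longleftrightarrow> ref_P V E F \<and> ref_P V F E"

end

theory Submission
  imports Defs
begin


definition qf :: "'a set \<Rightarrow> ('a \<Rightarrow> 'a \<Rightarrow> complex) \<Rightarrow> ('a \<Rightarrow> complex) \<Rightarrow> complex" where
  "qf S A \<psi> = (\<Sum>s\<in>S. \<Sum>t\<in>S. cnj (\<psi> s) * A s t * \<psi> t)"

definition pos :: "'a set \<Rightarrow> ('a \<Rightarrow> 'a \<Rightarrow> complex) \<Rightarrow> bool" where
  "pos S A \<longleftrightarrow> (\<forall>\<psi>. Im (qf S A \<psi>) = 0 \<and> Re (qf S A \<psi>) \<ge> 0)"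

lemma psd_iff: "psd X A \<longleftrightarrow> is_op X A \<and> pos (asgs X) A"
  by (simp add: psd_def pos_def qf_def)

lemma qf_add: "qf S A (\<lambda>x. f x + g x) = qf S A f + qf S A g
   + (\<Sum>s\<in>S. \<Sum>t\<in>S. cnj (f s) * A s t * g t) + (\<Sum>s\<in>S. \<Sum>t\<in>S. cnj (g s) * A s t * f t)"
  unfolding qf_def by (simp add: algebra_simps sum.distrib)

lemma mult_if0_r: "(x::complex) * (if P then y else 0) = (if P then x * y else 0)" by simp
lemma mult_if0_l: "(if P then y else 0) * (x::complex) = (if P then y * x else 0)" by simp
lemma cnj_if: "cnj (if P then x else 0) = (if P then cnj x else 0)" by simp
lemma sum_if_const: "(\<Sum>t\<in>T. if P then f t else (0::complex)) = (if P then sum f T else 0)" by simp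
lemmas delta_simps = mult_if0_r mult_if0_l cnj_if sum.delta sum.delta' sum_if_const

lemma qf_single: assumes "finite S" "a \<in> S"
  shows "qf S A (\<lambda>x. if x = a then \<alpha> else 0) = cnj \<alpha> * A a a * \<alpha>"
  using assms unfolding qf_def by (simp add: delta_simps del: complex_cnj_zero_iff)

lemma cross_single: assumes "finite S" "a \<in> S" "b \<in> S"
  shows "(\<Sum>s\<in>S. \<Sum>t\<in>S. cnj (if s = a then \<alpha> else 0) * A s t * (if t = b then \<beta> else 0)) = cnj \<alpha> * A a b * \<beta>"
  using assms by (simp add: delta_simps del: complex_cnj_zero_iff)

lemma qf_two: assumes "finite S" "a \<in> S" "b \<in> S" "a \<noteq> b"
  shows "qf S A (\<lambda>x. if x = a then \<alpha> else if x = b then \<beta> else 0) =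
     cnj \<alpha> * A a a * \<alpha> + cnj \<beta> * A b b * \<beta> + cnj \<alpha> * A a b * \<beta> + cnj \<beta> * A b a * \<alpha>"
proof -
  have e: "(\<lambda>x. if x = a then \<alpha> else if x = b then \<beta> else 0) = (\<lambda>x. (if x = a then \<alpha> else 0) + (if x = b then \<beta> else 0))"
    using assms(4) by auto
  show ?thesis unfolding e qf_add using assms
    by (simp add: qf_single cross_single del: qf_def)
qed

lemma pos_diag: assumes "pos S A" "finite S" "a \<in> S"
  shows "Im (A a a) = 0 \<and> Re (A a a) \<ge> 0"
  using assms(1) qf_single[OF assms(2,3), of A 1] unfolding pos_def by (metis mult_1 mult_1_right complex_cnj_one)

lemma pos_herm: assumes "pos S A" "finite S" "a \<in> S" "b \<in> S"
  shows "A a b = cnj (A b a)"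
proof (cases "a = b")
  case True
  have "Im (A a a) = 0" using pos_diag[OF assms(1-3)] by blast
  then show ?thesis using True by (simp add: complex_eq_iff)
next
  case False
  have h1: "Im (A a a) = 0" "Im (A b b) = 0" using pos_diag[OF assms(1,2,3)] pos_diag[OF assms(1,2,4)] by auto
  have "Im (qf S A (\<lambda>x. if x = a then 1 else if x = b then 1 else 0)) = 0" using assms(1) unfolding pos_def by blast
  moreover have "qf S A (\<lambda>x. if x = a then 1 else if x = b then 1 else 0) = A a a + A b b + A a b + A b a"
    using qf_two[OF assms(2-4) False, of A 1 1] by simp
  ultimately have e1: "Im (A a b) + Im (A b a) = 0" using h1 by simp
  have "Im (qf S A (\<lambda>x. if x = a then 1 else if x = b then \<i> else 0)) = 0" using assms(1) unfolding pos_def by blast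
  moreover have "qf S A (\<lambda>x. if x = a then 1 else if x = b then \<i> else 0) = A a a + A b b + \<i> * A a b - \<i> * A b a"
    using qf_two[OF assms(2-4) False, of A 1 \<i>] by (simp add: algebra_simps)
  ultimately have e2: "Re (A a b) - Re (A b a) = 0" using h1 by simp
  show ?thesis using e1 e2 by (simp add: complex_eq_iff)
qed

lemma pos_zero_row: assumes "pos S A" "finite S" "a \<in> S" "b \<in> S" "A a a = 0"
  shows "A a b = 0"
proof (rule ccontr)
  assume nz: "A a b \<noteq> 0"
  then have "a \<noteq> b" using assms(5) by auto
  define z where "z = A a b"
  have hb: "A b a = cnj z" using pos_herm[OF assms(1,2,4,3)] z_def by simp
  define r :: real where "r = (Re (A b b) + 1) / (2 * (cmod z)^2)"
  have zpos: "cmod z > 0" using nz z_def by simp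
  have "Re (qf S A (\<lambda>x. if x = a then - (of_real r * z) else if x = b then 1 else 0)) \<ge> 0"
    using assms(1) unfolding pos_def by blast
  also have "qf S A (\<lambda>x. if x = a then - (of_real r * z) else if x = b then 1 else 0)
     = A b b - 2 * of_real r * (cnj z * z)"
    using qf_two[OF assms(2-4) \<open>a \<noteq> b\<close>, of A "- (of_real r * z)" 1] assms(5) hb z_def[symmetric]
    by (simp add: algebra_simps)
  also have "cnj z * z = of_real ((cmod z)^2)" by (subst complex_norm_square) (simp add: mult.commute)
  finally have "0 \<le> Re (A b b) - 2 * r * (cmod z)^2" by simp
  moreover have "2 * r * (cmod z)^2 = Re (A b b) + 1" unfolding r_def using zpos by (simp add: field_simps)
  ultimately show False by simp
qed

lemma pos_zero_col: assumes "pos S A" "finite S" "a \<in> S" "b \<in> S" "A a a = 0"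
  shows "A b a = 0"
  using pos_herm[OF assms(1,2,4,3)] pos_zero_row[OF assms] by simp

lemma pos_subset: assumes "pos S A" "finite S" "T \<subseteq> S" shows "pos T A"
  unfolding pos_def
proof
  fix \<psi>
  have "qf T A \<psi> = qf S A (\<lambda>x. if x \<in> T then \<psi> x else 0)"
  proof -
    have "qf S A (\<lambda>x. if x \<in> T then \<psi> x else 0) = (\<Sum>s\<in>S. if s \<in> T then (\<Sum>t\<in>S. if t \<in> T then cnj (\<psi> s) * A s t * \<psi> t else 0) else 0)"
      unfolding qf_def by (auto intro!: sum.cong)
    also have "\<dots> = (\<Sum>s\<in>S \<inter> T. (\<Sum>t\<in>S \<inter> T. cnj (\<psi> s) * A s t * \<psi> t))"
      using assms(2) by (simp add: sum.inter_restrict)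
    finally show ?thesis using assms(3) unfolding qf_def by (simp add: Int_absorb1)
  qed
  then show "Im (qf T A \<psi>) = 0 \<and> Re (qf T A \<psi>) \<ge> 0" using assms(1) unfolding pos_def by simp
qed

lemma sum_insert_zero_rc: assumes "finite S" "a \<notin> S" "\<And>t. t \<in> insert a S \<Longrightarrow> Q a t = 0" "\<And>t. t \<in> insert a S \<Longrightarrow> Q t a = 0"
  shows "(\<Sum>s\<in>insert a S. \<Sum>t\<in>insert a S. P s t * (Q t s :: complex)) = (\<Sum>s\<in>S. \<Sum>t\<in>S. P s t * Q t s)"
  using assms by (simp add: sum.insert)

lemma key: "finite S \<Longrightarrow> pos S P \<Longrightarrow> pos S Q \<Longrightarrow> 0 \<le> Re (\<Sum>s\<in>S. \<Sum>t\<in>S. P s t * Q t s)"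
proof (induction S arbitrary: P Q rule: finite_induct)
  case empty
  then show ?case by simp
next
  case (insert a S)
  let ?S = "insert a S"
  have fS: "finite ?S" using insert by simp
  have PS: "pos S P" using pos_subset[OF insert.prems(1) fS] by blast
  show ?case
  proof (cases "Q a a = 0")
    case True
    have r: "\<And>t. t \<in> ?S \<Longrightarrow> Q a t = 0" using pos_zero_row[OF insert.prems(2) fS _ _ True] by blast
    have c: "\<And>t. t \<in> ?S \<Longrightarrow> Q t a = 0" using pos_zero_col[OF insert.prems(2) fS _ _ True] by blast
    have QS: "pos S Q" using pos_subset[OF insert.prems(2) fS] by blast
    show ?thesis using sum_insert_zero_rc[OF insert.hyps(1,2), of Q P] r c insert.IH[OF PS QS] by simp
  next
    case False
    define q where "q = Q a a"
    have qr: "Im q = 0" "Re q \<ge> 0" using pos_diag[OF insert.prems(2) fS] q_def by auto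
    have qc: "cnj q = q" using qr(1) by (simp add: complex_eq_iff)
    have qnz: "q \<noteq> 0" using False q_def by simp
    have herm: "\<And>s t. s \<in> ?S \<Longrightarrow> t \<in> ?S \<Longrightarrow> Q s t = cnj (Q t s)"
      using pos_herm[OF insert.prems(2) fS] by blast
    define Q' where "Q' = (\<lambda>s t. Q s t - Q s a * Q a t / q)"
    have Q'pos: "pos ?S Q'"
      unfolding pos_def
    proof
      fix \<psi>
      define u where "u = (\<Sum>t\<in>?S. Q a t * \<psi> t)"
      define c where "c = - u / q"
      have cu: "(\<Sum>s\<in>?S. cnj (\<psi> s) * Q s a) = cnj u"
      proof -
        have "(\<Sum>s\<in>?S. cnj (\<psi> s) * Q s a) = (\<Sum>s\<in>?S. cnj (Q a s * \<psi> s))"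
        proof (rule sum.cong)
          fix s assume "s \<in> ?S"
          then have "Q s a = cnj (Q a s)" using herm[of s a] by simp
          then show "cnj (\<psi> s) * Q s a = cnj (Q a s * \<psi> s)" by (simp add: mult.commute)
        qed simp
        then show ?thesis unfolding u_def by simp
      qed
      have "qf ?S Q' \<psi> = qf ?S Q \<psi> - (\<Sum>s\<in>?S. \<Sum>t\<in>?S. cnj (\<psi> s) * Q s a * (Q a t * \<psi> t) / q)"
        unfolding qf_def Q'_def by (simp add: algebra_simps sum_subtractf sum_divide_distrib)
      also have "(\<Sum>s\<in>?S. \<Sum>t\<in>?S. cnj (\<psi> s) * Q s a * (Q a t * \<psi> t) / q) = cnj u * u / q"
      proof -
        have "(\<Sum>s\<in>?S. \<Sum>t\<in>?S. cnj (\<psi> s) * Q s a * (Q a t * \<psi> t) / q) = (\<Sum>s\<in>?S. cnj (\<psi> s) * Q s a) * u / q"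
          unfolding u_def sum_product sum_divide_distrib by simp
        then show ?thesis unfolding cu .
      qed
      finally have e1: "qf ?S Q' \<psi> = qf ?S Q \<psi> - cnj u * u / q" .
      have "qf ?S Q (\<lambda>x. \<psi> x + (if x = a then c else 0)) = qf ?S Q \<psi> + cnj c * Q a a * c
          + (\<Sum>s\<in>?S. cnj (\<psi> s) * Q s a) * c + cnj c * u"
        unfolding qf_add using fS
        by (simp add: qf_single delta_simps u_def sum_distrib_left sum_distrib_right mult.assoc del: complex_cnj_zero_iff)
      also have "\<dots> = qf ?S Q \<psi> - cnj u * u / q"
        unfolding cu c_def q_def[symmetric] using qnz qc by (simp add: field_simps)
      finally have "qf ?S Q' \<psi> = qf ?S Q (\<lambda>x. \<psi> x + (if x = a then c else 0))" using e1 by simp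
      then show "Im (qf ?S Q' \<psi>) = 0 \<and> Re (qf ?S Q' \<psi>) \<ge> 0" using insert.prems(2) unfolding pos_def by simp
    qed
    have r: "\<And>t. Q' a t = 0" unfolding Q'_def q_def using False by simp
    have c: "\<And>t. Q' t a = 0" unfolding Q'_def q_def using False by simp
    have Q'S: "pos S Q'" using pos_subset[OF Q'pos fS] by blast
    have s1: "0 \<le> Re (\<Sum>s\<in>?S. \<Sum>t\<in>?S. P s t * Q' t s)"
      using sum_insert_zero_rc[OF insert.hyps(1,2), of Q' P] r c insert.IH[OF PS Q'S] by simp
    define w where "w = (\<lambda>t. Q t a)"
    have "(\<Sum>s\<in>?S. \<Sum>t\<in>?S. P s t * Q t s) = (\<Sum>s\<in>?S. \<Sum>t\<in>?S. P s t * Q' t s)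
        + (\<Sum>s\<in>?S. \<Sum>t\<in>?S. cnj (w s) * P s t * w t) / q"
    proof -
      have "\<And>s t. s \<in> ?S \<Longrightarrow> t \<in> ?S \<Longrightarrow> P s t * Q t s = P s t * Q' t s + cnj (w s) * P s t * w t / q"
      proof -
        fix s t assume st: "s \<in> ?S" "t \<in> ?S"
        have "cnj (w s) = Q a s" unfolding w_def using herm[OF _ st(1), of a] by simp
        then show "P s t * Q t s = P s t * Q' t s + cnj (w s) * P s t * w t / q"
          unfolding Q'_def w_def using qnz by (simp add: field_simps)
      qed
      then show ?thesis by (simp add: sum.distrib sum_divide_distrib)
    qed
    moreover have "0 \<le> Re ((\<Sum>s\<in>?S. \<Sum>t\<in>?S. cnj (w s) * P s t * w t) / q)"
    proof -
      have h: "Im (qf ?S P w) = 0 \<and> Re (qf ?S P w) \<ge> 0" using insert.prems(1) unfolding pos_def by blast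
      have "Re (qf ?S P w / q) = Re (qf ?S P w) / Re q" using h qr(1) by (simp add: Re_divide complex_norm_square power2_eq_square cmod_def)
      then show ?thesis using h qr unfolding qf_def by simp
    qed
    ultimately show ?thesis using s1 by simp
  qed
qed



lemma finite_asgs: assumes "finite X" shows "finite (asgs X)"
proof -
  have "asgs X \<subseteq> (\<lambda>S q. q \<in> S) ` Pow X"
  proof
    fix s assume s: "s \<in> asgs X"
    have "s = (\<lambda>q. q \<in> {q. s q})" by auto
    moreover have "{q. s q} \<subseteq> X" using s unfolding asgs_def by auto
    ultimately show "s \<in> (\<lambda>S q. q \<in> S) ` Pow X" by blast
  qed
  then show ?thesis using assms by (meson finite_Pow_iff finite_imageI finite_subset)
qed

lemma restr_id: "s \<in> asgs X \<Longrightarrow> restr X s = s"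
  unfolding asgs_def restr_def by auto

lemma restr_in: "restr W s \<in> asgs W"
  unfolding asgs_def restr_def by auto

lemma restr_restr: "V \<subseteq> X \<Longrightarrow> restr V (restr X s) = restr V s"
  unfolding restr_def by auto

lemma asgs_mono: "V \<subseteq> X \<Longrightarrow> s \<in> asgs V \<Longrightarrow> s \<in> asgs X"
  unfolding asgs_def by auto

definition upd :: "nat set \<Rightarrow> asg \<Rightarrow> asg \<Rightarrow> asg" where
  "upd X a \<sigma> = (\<lambda>q. if q \<in> X then \<sigma> q else a q)"

lemma fib:
  assumes "X \<subseteq> Y" "finite Y" "a \<in> asgs Y"
  shows "(\<Sum>s\<in>asgs Y. if agree (Y - X) s a then f s else 0) = (\<Sum>\<sigma>\<in>asgs X. f (upd X a \<sigma>))"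
proof -
  have "(\<Sum>s\<in>asgs Y. if agree (Y - X) s a then f s else 0) = sum f {s\<in>asgs Y. agree (Y - X) s a}"
    using finite_asgs[OF assms(2)] by (simp add: sum.inter_filter)
  also have "\<dots> = (\<Sum>\<sigma>\<in>asgs X. f (upd X a \<sigma>))"
  proof (rule sum.reindex_bij_witness[of _ "upd X a" "restr X"])
    fix \<sigma> assume s: "\<sigma> \<in> asgs X"
    show "restr X (upd X a \<sigma>) = \<sigma>" using s unfolding restr_def upd_def asgs_def by auto
    show "upd X a \<sigma> \<in> {s \<in> asgs Y. agree (Y - X) s a}"
      using s assms unfolding upd_def asgs_def agree_def by auto
  next
    fix s assume s: "s \<in> {s \<in> asgs Y. agree (Y - X) s a}"
    show "upd X a (restr X s) = s"
      using s assms unfolding upd_def asgs_def agree_def restr_def by (auto simp: fun_eq_iff)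
    then show "f (upd X a (restr X s)) = f s" by simp
    show "restr X s \<in> asgs X" by (rule restr_in)
  qed
  finally show ?thesis .
qed

lemma split_sum:
  assumes "W \<subseteq> X" "finite X"
  shows "(\<Sum>s\<in>asgs X. f s) = (\<Sum>c\<in>asgs (X - W). \<Sum>\<sigma>\<in>asgs W. f (upd W c \<sigma>))"
proof -
  have fX: "finite (asgs X)" and fXW: "finite (asgs (X - W))" using finite_asgs assms by auto
  have "(\<Sum>s\<in>asgs X. f s) = (\<Sum>c\<in>asgs (X - W). sum f {s. s \<in> asgs X \<and> restr (X - W) s = c})"
    by (rule sum.group[symmetric, OF fX fXW]) (auto intro: restr_in)
  also have "\<dots> = (\<Sum>c\<in>asgs (X - W). \<Sum>\<sigma>\<in>asgs W. f (upd W c \<sigma>))"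
  proof (rule sum.cong[OF refl])
    fix c assume c: "c \<in> asgs (X - W)"
    have cX: "c \<in> asgs X" using c asgs_mono by blast
    have "{s. s \<in> asgs X \<and> restr (X - W) s = c} = {s \<in> asgs X. agree (X - W) s c}"
      using c unfolding restr_def agree_def asgs_def by (auto simp: fun_eq_iff)
    then have "sum f {s. s \<in> asgs X \<and> restr (X - W) s = c} = (\<Sum>s\<in>asgs X. if agree (X - W) s c then f s else 0)"
      using fX by (simp add: sum.inter_filter)
    also have "\<dots> = (\<Sum>\<sigma>\<in>asgs W. f (upd W c \<sigma>))" by (rule fib[OF assms(1,2) cX])
    finally show "sum f {s. s \<in> asgs X \<and> restr (X - W) s = c} = (\<Sum>\<sigma>\<in>asgs W. f (upd W c \<sigma>))" .
  qed
  finally show ?thesis .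
qed

lemma upd_upd: "upd W (upd W c \<tau>) \<sigma> = upd W c \<sigma>" unfolding upd_def by auto

lemma restr_upd: "\<sigma> \<in> asgs W \<Longrightarrow> restr W (upd W c \<sigma>) = \<sigma>"
  unfolding restr_def upd_def asgs_def by auto

lemma upd_in: "W \<subseteq> X \<Longrightarrow> c \<in> asgs X \<Longrightarrow> \<sigma> \<in> asgs W \<Longrightarrow> upd W c \<sigma> \<in> asgs X"
  unfolding upd_def asgs_def by auto

lemma ext_op_psd:
  assumes "W \<subseteq> X" "finite X" "pos (asgs W) N"
  shows "psd X (ext_op W X N)"
  unfolding psd_iff
proof
  show "is_op X (ext_op W X N)" unfolding is_op_def ext_op_def by auto
  show "pos (asgs X) (ext_op W X N)"
    unfolding pos_def
  proof
    fix \<psi>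
    have "qf (asgs X) (ext_op W X N) \<psi> = (\<Sum>s\<in>asgs X. cnj (\<psi> s) * (\<Sum>t\<in>asgs X. if agree (X - W) t s then N (restr W s) (restr W t) * \<psi> t else 0))"
      unfolding qf_def ext_op_def
      by (auto intro!: sum.cong simp: sum_distrib_left agree_def)
    also have "\<dots> = (\<Sum>s\<in>asgs X. cnj (\<psi> s) * (\<Sum>\<sigma>\<in>asgs W. N (restr W s) \<sigma> * \<psi> (upd W s \<sigma>)))"
      by (intro sum.cong refl, subst fib[OF assms(1,2)]) (auto simp: restr_upd)
    also have "\<dots> = (\<Sum>c\<in>asgs (X - W). \<Sum>\<tau>\<in>asgs W. cnj (\<psi> (upd W c \<tau>)) * (\<Sum>\<sigma>\<in>asgs W. N \<tau> \<sigma> * \<psi> (upd W c \<sigma>)))"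
      by (subst split_sum[OF assms(1,2)]) (simp add: upd_upd restr_upd)
    also have "\<dots> = (\<Sum>c\<in>asgs (X - W). qf (asgs W) N (\<lambda>\<sigma>. \<psi> (upd W c \<sigma>)))"
      unfolding qf_def by (simp add: sum_distrib_left mult.assoc)
    finally have e: "qf (asgs X) (ext_op W X N) \<psi> = (\<Sum>c\<in>asgs (X - W). qf (asgs W) N (\<lambda>\<sigma>. \<psi> (upd W c \<sigma>)))" .
    have "\<And>c. Im (qf (asgs W) N (\<lambda>\<sigma>. \<psi> (upd W c \<sigma>))) = 0 \<and> Re (qf (asgs W) N (\<lambda>\<sigma>. \<psi> (upd W c \<sigma>))) \<ge> 0"
      using assms(3) unfolding pos_def by blast
    then show "Im (qf (asgs X) (ext_op W X N) \<psi>) = 0 \<and> Re (qf (asgs X) (ext_op W X N) \<psi>) \<ge> 0"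
      unfolding e by (simp add: Im_sum Re_sum sum_nonneg)
  qed
qed



definition rank1 :: "nat set \<Rightarrow> (asg \<Rightarrow> complex) \<Rightarrow> op" where
  "rank1 X \<psi> = (\<lambda>u v. if u \<in> asgs X \<and> v \<in> asgs X then \<psi> u * cnj (\<psi> v) else 0)"

definition dual :: "nat set \<Rightarrow> nat set \<Rightarrow> sop \<Rightarrow> op \<Rightarrow> op" where
  "dual V X K N = (\<lambda>a b. if a \<in> asgs X \<and> b \<in> asgs X then
     (\<Sum>s\<in>asgs X. \<Sum>t\<in>asgs X. N s t * (if agree (X - V) t b \<and> agree (X - V) s a
        then K (restr V t) (restr V s) (restr V b) (restr V a) else 0)) else 0)"

lemma tr_opmult: "tr X (opmult X A B) = (\<Sum>s\<in>asgs X. \<Sum>u\<in>asgs X. A s u * B u s)"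
  unfolding tr_def opmult_def by simp

lemma sum4_swap: "(\<Sum>a\<in>A. \<Sum>b\<in>B. \<Sum>s\<in>C. \<Sum>t\<in>D. f a b s t) = (\<Sum>s\<in>C. \<Sum>t\<in>D. \<Sum>b\<in>B. \<Sum>a\<in>A. f a b s t)"
proof -
  have "(\<Sum>a\<in>A. \<Sum>b\<in>B. \<Sum>s\<in>C. \<Sum>t\<in>D. f a b s t) = (\<Sum>a\<in>A. \<Sum>s\<in>C. \<Sum>b\<in>B. \<Sum>t\<in>D. f a b s t)"
    by (rule sum.cong[OF refl], rule sum.swap)
  also have "\<dots> = (\<Sum>s\<in>C. \<Sum>a\<in>A. \<Sum>b\<in>B. \<Sum>t\<in>D. f a b s t)" by (rule sum.swap)
  also have "\<dots> = (\<Sum>s\<in>C. \<Sum>a\<in>A. \<Sum>t\<in>D. \<Sum>b\<in>B. f a b s t)"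
    by (rule sum.cong[OF refl], rule sum.cong[OF refl], rule sum.swap)
  also have "\<dots> = (\<Sum>s\<in>C. \<Sum>t\<in>D. \<Sum>a\<in>A. \<Sum>b\<in>B. f a b s t)"
    by (rule sum.cong[OF refl], rule sum.swap)
  also have "\<dots> = (\<Sum>s\<in>C. \<Sum>t\<in>D. \<Sum>b\<in>B. \<Sum>a\<in>A. f a b s t)"
    by (rule sum.cong[OF refl], rule sum.cong[OF refl], rule sum.swap)
  finally show ?thesis .
qed

lemma R1: "tr X (opmult X (rank1 X \<psi>) B) = qf (asgs X) B \<psi>"
proof -
  have "tr X (opmult X (rank1 X \<psi>) B) = (\<Sum>s\<in>asgs X. \<Sum>u\<in>asgs X. cnj (\<psi> u) * B u s * \<psi> s)"
    unfolding tr_opmult rank1_def by (auto intro!: sum.cong)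
  also have "\<dots> = qf (asgs X) B \<psi>" unfolding qf_def by (rule sum.swap)
  finally show ?thesis .
qed

lemma R1': "tr X (opmult X B (rank1 X \<phi>)) = qf (asgs X) B \<phi>"
  unfolding tr_opmult rank1_def qf_def by (auto intro!: sum.cong)

lemma R2: "psd X (rank1 X \<psi>)"
  unfolding psd_iff
proof
  show "is_op X (rank1 X \<psi>)" unfolding is_op_def rank1_def by auto
  show "pos (asgs X) (rank1 X \<psi>)" unfolding pos_def
  proof
    fix \<phi>
    define z where "z = (\<Sum>s\<in>asgs X. cnj (\<phi> s) * \<psi> s)"
    have cz: "cnj z = (\<Sum>t\<in>asgs X. cnj (\<psi> t) * \<phi> t)" unfolding z_def by (simp add: mult.commute)
    have "qf (asgs X) (rank1 X \<psi>) \<phi> = z * cnj z"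
      unfolding cz unfolding qf_def rank1_def z_def sum_product by (auto intro!: sum.cong simp: mult.assoc)
    also have "\<dots> = of_real ((cmod z)^2)" using complex_norm_square[of z] by simp
    finally show "Im (qf (asgs X) (rank1 X \<psi>) \<phi>) = 0 \<and> Re (qf (asgs X) (rank1 X \<psi>) \<phi>) \<ge> 0" by simp
  qed
qed

lemma dual_a: "tr X (opmult X (dual V X K N) \<rho>) = tr X (opmult X N (apply_sop V X K \<rho>))"
proof -
  define G where "G = (\<lambda>a b s t. N s t * (if agree (X - V) t b \<and> agree (X - V) s a
        then K (restr V t) (restr V s) (restr V b) (restr V a) * \<rho> b a else 0))"
  have L: "tr X (opmult X (dual V X K N) \<rho>) = (\<Sum>a\<in>asgs X. \<Sum>b\<in>asgs X. \<Sum>s\<in>asgs X. \<Sum>t\<in>asgs X. G a b s t)"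
    unfolding tr_opmult dual_def G_def by (auto simp: sum_distrib_right intro!: sum.cong)
  have R: "tr X (opmult X N (apply_sop V X K \<rho>)) = (\<Sum>s\<in>asgs X. \<Sum>t\<in>asgs X. \<Sum>b\<in>asgs X. \<Sum>a\<in>asgs X. G a b s t)"
    unfolding tr_opmult apply_sop_def G_def by (auto simp: sum_distrib_left intro!: sum.cong)
  show ?thesis unfolding L R by (rule sum4_swap)
qed

lemma dual_scale: "dual V X K (\<lambda>s t. c * N s t) = (\<lambda>a b. c * dual V X K N a b)"
  unfolding dual_def by (auto simp: fun_eq_iff sum_distrib_left mult.assoc)

lemma agree_upd:
  assumes "V \<subseteq> X" "X \<subseteq> Y" "\<sigma> \<in> asgs X"
  shows "agree (Y - V) (upd X a \<sigma>) a \<longleftrightarrow> agree (X - V) \<sigma> (restr X a)"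
  using assms unfolding agree_def upd_def restr_def by auto

lemma agree_upd2: "agree (Y - X) (upd X a \<sigma>) (upd X b \<tau>) \<longleftrightarrow> agree (Y - X) a b"
  unfolding agree_def upd_def by auto

lemma restr_V_upd: "V \<subseteq> X \<Longrightarrow> restr V (upd X a \<sigma>) = restr V \<sigma>"
  unfolding restr_def upd_def by auto

lemma dual_b:
  assumes "V \<subseteq> X" "X \<subseteq> Y" "finite Y"
  shows "ext_op X Y (dual V X K N) = dual V Y K (ext_op X Y N)"
proof (rule ext, rule ext)
  fix a b
  show "ext_op X Y (dual V X K N) a b = dual V Y K (ext_op X Y N) a b"
  proof (cases "a \<in> asgs Y \<and> b \<in> asgs Y")
    case False
    then show ?thesis unfolding ext_op_def dual_def by auto
  next
    case True
    then have a: "a \<in> asgs Y" and b: "b \<in> asgs Y" by auto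
    have YV: "Y - X \<subseteq> Y - V" using assms by auto
    define g where "g = (\<lambda>s t. ext_op X Y N s t * (if agree (Y - V) t b \<and> agree (Y - V) s a
        then K (restr V t) (restr V s) (restr V b) (restr V a) else 0))"
    have "dual V Y K (ext_op X Y N) a b = (\<Sum>s\<in>asgs Y. \<Sum>t\<in>asgs Y. g s t)"
      unfolding dual_def g_def using a b by simp
    also have "\<dots> = (\<Sum>s\<in>asgs Y. if agree (Y - X) s a then (\<Sum>t\<in>asgs Y. if agree (Y - X) t b then g s t else 0) else 0)"
    proof -
      have ag: "\<And>s c. agree (Y - V) s c \<Longrightarrow> agree (Y - X) s c" using YV by (auto simp: agree_def)
      have gz: "\<And>s t. g s t = (if agree (Y - X) s a then (if agree (Y - X) t b then g s t else 0) else 0)"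
        using ag unfolding g_def by fastforce
      show ?thesis by (subst gz) (simp add: sum_if_const)
    qed
    also have "\<dots> = (\<Sum>\<sigma>\<in>asgs X. \<Sum>\<tau>\<in>asgs X. g (upd X a \<sigma>) (upd X b \<tau>))"
      by (simp add: fib[OF assms(2,3) a] fib[OF assms(2,3) b])
    also have "\<dots> = (\<Sum>\<sigma>\<in>asgs X. \<Sum>\<tau>\<in>asgs X. if agree (Y - X) a b then N \<sigma> \<tau> *
        (if agree (X - V) \<tau> (restr X b) \<and> agree (X - V) \<sigma> (restr X a)
        then K (restr V \<tau>) (restr V \<sigma>) (restr V b) (restr V a) else 0) else 0)"
    proof (intro sum.cong refl)
      fix \<sigma> \<tau> assume s: "\<sigma> \<in> asgs X" and t: "\<tau> \<in> asgs X"
      show "g (upd X a \<sigma>) (upd X b \<tau>) = (if agree (Y - X) a b then N \<sigma> \<tau> *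
        (if agree (X - V) \<tau> (restr X b) \<and> agree (X - V) \<sigma> (restr X a)
        then K (restr V \<tau>) (restr V \<sigma>) (restr V b) (restr V a) else 0) else 0)"
        unfolding g_def ext_op_def
        using upd_in[OF assms(2) a s] upd_in[OF assms(2) b t] agree_upd[OF assms(1,2) s, of a]
          agree_upd[OF assms(1,2) t, of b] agree_upd2 restr_upd[OF s] restr_upd[OF t]
          restr_V_upd[OF assms(1)]
        by auto
    qed
    also have "\<dots> = ext_op X Y (dual V X K N) a b"
    proof -
      have e: "restr V (restr X a) = restr V a" "restr V (restr X b) = restr V b"
        using restr_restr[OF assms(1)] by auto
      show ?thesis
        unfolding ext_op_def dual_def e using a b restr_in[of X a] restr_in[of X b] by auto
    qed
    finally show ?thesis by simp
  qed
qed



lemma apply_sop_diff: "apply_sop V X (\<lambda>a b c d. F a b c d - E a b c d) A = (\<lambda>s t. apply_sop V X F A s t - apply_sop V X E A s t)"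
proof -
  have h: "\<And>c x y (z::complex). (if c then (x - y) * z else 0) = (if c then x*z else 0) - (if c then y*z else 0)"
    by (simp add: algebra_simps)
  show ?thesis unfolding apply_sop_def by (simp only: h sum_subtractf fun_eq_iff) auto
qed

lemma apply_sop_scale: "apply_sop V X K (\<lambda>s t. d * A s t) = (\<lambda>s t. d * apply_sop V X K A s t)"
  unfolding apply_sop_def by (auto simp: fun_eq_iff sum_distrib_left algebra_simps intro!: sum.cong)

lemma apply_sop_is_op: "is_op X (apply_sop V X K A)"
  unfolding is_op_def apply_sop_def by auto

lemma apply_sop_zero: "apply_sop V X (\<lambda>a b c d. 0) A = (\<lambda>s t. 0)"
  unfolding apply_sop_def by (intro ext) (simp only: mult_zero_left if_cancel sum.neutral_const)

lemma tr_opmult_diff_r: "tr X (opmult X P (\<lambda>s t. B1 s t - B2 s t)) = tr X (opmult X P B1) - tr X (opmult X P B2)"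
  unfolding tr_opmult by (simp add: algebra_simps sum_subtractf)

lemma tr_opmult_scale_l: "tr X (opmult X (\<lambda>s t. c * N s t) B) = c * tr X (opmult X N B)"
  unfolding tr_opmult by (simp add: sum_distrib_left mult.assoc)

lemma tr_opmult_scale_r: "tr X (opmult X N (\<lambda>s t. c * B s t)) = c * tr X (opmult X N B)"
  unfolding tr_opmult by (simp add: sum_distrib_left algebra_simps)

lemma tr_opmult_id_minus: assumes "finite X" shows "tr X (opmult X (\<lambda>s t. idop X s t - P s t) B) = tr X B - tr X (opmult X P B)"
proof -
  have "tr X (opmult X (\<lambda>s t. idop X s t - P s t) B) = (\<Sum>s\<in>asgs X. \<Sum>u\<in>asgs X. idop X s u * B u s) - tr X (opmult X P B)"
    unfolding tr_opmult by (simp add: algebra_simps sum_subtractf)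
  also have "(\<Sum>s\<in>asgs X. \<Sum>u\<in>asgs X. idop X s u * B u s) = tr X B"
    unfolding tr_def idop_def using finite_asgs[OF assms] by (auto intro!: sum.cong simp: delta_simps if_distrib[where f="\<lambda>x. x * _"] cong: if_cong)
  finally show ?thesis .
qed

lemma tr_diff: "tr X (\<lambda>s t. A s t - B s t) = tr X A - tr X B"
  unfolding tr_def by (simp add: sum_subtractf)

lemma ext_op_id: "is_op X M \<Longrightarrow> ext_op X X M = M"
  unfolding ext_op_def is_op_def by (auto simp: fun_eq_iff restr_id agree_def)

lemma ext_op_scale: "ext_op W X (\<lambda>s t. c * N s t) = (\<lambda>s t. c * ext_op W X N s t)"
  unfolding ext_op_def by (auto simp: fun_eq_iff)

lemma ext_op_idop_minus:
  assumes "W \<subseteq> X"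
  shows "ext_op W X (\<lambda>s t. idop W s t - N s t) = (\<lambda>s t. idop X s t - ext_op W X N s t)"
proof (intro ext)
  fix s t
  show "ext_op W X (\<lambda>s t. idop W s t - N s t) s t = idop X s t - ext_op W X N s t"
  proof (cases "s \<in> asgs X \<and> t \<in> asgs X \<and> agree (X - W) s t")
    case True
    have "restr W s = restr W t \<longleftrightarrow> s = t"
    proof
      assume "restr W s = restr W t"
      note eq = this
      show "s = t"
      proof (rule ext)
        fix q show "s q = t q" using fun_cong[OF eq, of q] True unfolding restr_def agree_def asgs_def
          by (cases "q \<in> W"; cases "q \<in> X") auto
      qed
    qed simp
    then show ?thesis using True restr_in[of W s] unfolding ext_op_def idop_def by auto
  next
    case False
    then show ?thesis unfolding ext_op_def idop_def agree_def by auto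
  qed
qed

lemma qf_diff: "qf S (\<lambda>s t. A s t - B s t) \<psi> = qf S A \<psi> - qf S B \<psi>"
  unfolding qf_def by (simp add: algebra_simps sum_subtractf)

lemma qf_scale: "qf S (\<lambda>s t. c * A s t) \<psi> = c * qf S A \<psi>"
  unfolding qf_def by (simp add: sum_distrib_left algebra_simps)

lemma psd_scale: assumes "psd X A" "0 \<le> d" shows "psd X (\<lambda>s t. of_real d * A s t)"
  using assms unfolding psd_iff pos_def is_op_def qf_scale by (auto simp: mult_nonneg_nonneg)

lemma psd_zero: "psd X (\<lambda>s t. 0)"
  unfolding psd_iff pos_def is_op_def qf_def by simp

lemma tr_psd: assumes "psd X A" "finite X" shows "Im (tr X A) = 0" "Re (tr X A) \<ge> 0"
proof -
  have "\<And>s. s \<in> asgs X \<Longrightarrow> Im (A s s) = 0 \<and> Re (A s s) \<ge> 0"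
    using pos_diag[of "asgs X" A] assms finite_asgs unfolding psd_iff by blast
  then show "Im (tr X A) = 0" "Re (tr X A) \<ge> 0" unfolding tr_def by (auto simp: Im_sum Re_sum intro: sum_nonneg)
qed

lemma eff:
  assumes "psd X M" "finite X" "0 \<le> c" "c * (\<Sum>s\<in>asgs X. \<Sum>t\<in>asgs X. cmod (M s t)) \<le> 1"
  shows "is_effect X (\<lambda>s t. of_real c * M s t)"
  unfolding is_effect_def
proof
  show "psd X (\<lambda>s t. of_real c * M s t)" by (rule psd_scale[OF assms(1,3)])
  have fX: "finite (asgs X)" using finite_asgs assms(2) .
  show "psd X (\<lambda>s t. idop X s t - of_real c * M s t)"
    unfolding psd_iff
  proof
    show "is_op X (\<lambda>s t. idop X s t - of_real c * M s t)"
      using assms(1) unfolding psd_iff is_op_def idop_def by auto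
    show "pos (asgs X) (\<lambda>s t. idop X s t - complex_of_real c * M s t)"
      unfolding pos_def
    proof
      fix \<phi>
      define T where "T = (\<Sum>u\<in>asgs X. (cmod (\<phi> u))^2)"
      define SM where "SM = (\<Sum>s\<in>asgs X. \<Sum>t\<in>asgs X. cmod (M s t))"
      have qI: "qf (asgs X) (idop X) \<phi> = of_real T"
      proof -
        have "qf (asgs X) (idop X) \<phi> = (\<Sum>s\<in>asgs X. cnj (\<phi> s) * \<phi> s)"
          unfolding qf_def idop_def using fX by (auto intro!: sum.cong simp: delta_simps if_distrib[where f="\<lambda>x. x * _"] cong: if_cong)
        also have "\<dots> = of_real T" unfolding T_def of_real_sum
          by (intro sum.cong refl) (metis complex_norm_square mult.commute)
        finally show ?thesis .
      qed
      have sq: "\<And>s. s \<in> asgs X \<Longrightarrow> (cmod (\<phi> s))^2 \<le> T"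
        unfolding T_def by (rule member_le_sum) (auto simp: fX)
      have pr: "\<And>s t. s \<in> asgs X \<Longrightarrow> t \<in> asgs X \<Longrightarrow> cmod (\<phi> s) * cmod (\<phi> t) \<le> T"
      proof -
        fix s t assume st: "s \<in> asgs X" "t \<in> asgs X"
        show "cmod (\<phi> s) * cmod (\<phi> t) \<le> T"
        proof (cases "cmod (\<phi> s) \<le> cmod (\<phi> t)")
          case True
          then have "cmod (\<phi> s) * cmod (\<phi> t) \<le> cmod (\<phi> t) * cmod (\<phi> t)" by (simp add: mult_right_mono)
          then show ?thesis using sq[OF st(2)] by (simp add: power2_eq_square)
        next
          case False
          then have "cmod (\<phi> s) * cmod (\<phi> t) \<le> cmod (\<phi> s) * cmod (\<phi> s)" by (simp add: mult_left_mono)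
          then show ?thesis using sq[OF st(1)] by (simp add: power2_eq_square)
        qed
      qed
      have "Re (qf (asgs X) M \<phi>) \<le> cmod (qf (asgs X) M \<phi>)" by (rule complex_Re_le_cmod)
      also have "\<dots> \<le> (\<Sum>s\<in>asgs X. \<Sum>t\<in>asgs X. cmod (cnj (\<phi> s) * M s t * \<phi> t))"
        unfolding qf_def by (rule order.trans[OF norm_sum sum_mono]) (rule norm_sum)
      also have "\<dots> \<le> (\<Sum>s\<in>asgs X. \<Sum>t\<in>asgs X. cmod (M s t) * T)"
      proof (intro sum_mono)
        fix s t assume st: "s \<in> asgs X" "t \<in> asgs X"
        have "cmod (cnj (\<phi> s) * M s t * \<phi> t) = cmod (M s t) * (cmod (\<phi> s) * cmod (\<phi> t))"
          by (simp add: norm_mult)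
        also have "\<dots> \<le> cmod (M s t) * T" using pr[OF st] by (simp add: mult_left_mono)
        finally show "cmod (cnj (\<phi> s) * M s t * \<phi> t) \<le> cmod (M s t) * T" .
      qed
      also have "\<dots> = SM * T" unfolding SM_def by (simp add: sum_distrib_right)
      finally have b: "Re (qf (asgs X) M \<phi>) \<le> SM * T" .
      have T0: "T \<ge> 0" unfolding T_def by (simp add: sum_nonneg)
      have "c * Re (qf (asgs X) M \<phi>) \<le> c * (SM * T)" using b assms(3) by (simp add: mult_left_mono)
      also have "\<dots> = (c * SM) * T" by simp
      also have "\<dots> \<le> 1 * T" using assms(4) T0 unfolding SM_def by (intro mult_right_mono) auto
      finally have cb: "c * Re (qf (asgs X) M \<phi>) \<le> T" by simp
      have imM: "Im (qf (asgs X) M \<phi>) = 0" using assms(1) unfolding psd_iff pos_def by blast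
      show "Im (qf (asgs X) (\<lambda>s t. idop X s t - complex_of_real c * M s t) \<phi>) = 0 \<and>
            0 \<le> Re (qf (asgs X) (\<lambda>s t. idop X s t - complex_of_real c * M s t) \<phi>)"
        unfolding qf_diff qf_scale qI using imM cb by simp
    qed
  qed
qed



lemma DProgD: "E \<in> DProg V \<Longrightarrow> is_sop V E \<and> cp V E"
  unfolding DProg_def by auto

lemma cpD: "cp V K \<Longrightarrow> finite X \<Longrightarrow> V \<subseteq> X \<Longrightarrow> psd X A \<Longrightarrow> psd X (apply_sop V X K A)"
  unfolding cp_def by blast

lemma trop_key:
  assumes "finite X" "psd X P" "psd X Q"
  shows "0 \<le> Re (tr X (opmult X P Q))"
  unfolding tr_opmult using key[of "asgs X" P Q] assms finite_asgs unfolding psd_iff by blast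

lemma T1:
  assumes "sop_le V E F"
  shows "ref_T V E F"
  unfolding ref_T_def models_tot_def
proof (intro allI impI)
  fix W M N X \<rho>
  assume WMN: "finite W \<and> is_effect W M \<and> is_effect W N"
    and mE: "\<forall>X \<rho>. finite X \<and> V \<union> W \<subseteq> X \<and> is_pdo X \<rho> \<longrightarrow>
           Re (tr X (opmult X (ext_op W X M) \<rho>)) \<le> Re (tr X (opmult X (ext_op W X N) (apply_sop V X E \<rho>)))"
    and X: "finite X \<and> V \<union> W \<subseteq> X \<and> is_pdo X \<rho>"
  have 1: "Re (tr X (opmult X (ext_op W X M) \<rho>)) \<le> Re (tr X (opmult X (ext_op W X N) (apply_sop V X E \<rho>)))"
    using mE X by blast
  have Nps: "psd X (ext_op W X N)"
    using ext_op_psd[of W X N] WMN X unfolding is_effect_def psd_iff by auto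
  have Gps: "psd X (apply_sop V X (\<lambda>a b c d. F a b c d - E a b c d) \<rho>)"
    using assms X unfolding sop_le_def cp_def is_pdo_def by auto
  have "0 \<le> Re (tr X (opmult X (ext_op W X N) (apply_sop V X (\<lambda>a b c d. F a b c d - E a b c d) \<rho>)))"
    using trop_key[OF _ Nps Gps] X by blast
  then have "Re (tr X (opmult X (ext_op W X N) (apply_sop V X E \<rho>))) \<le> Re (tr X (opmult X (ext_op W X N) (apply_sop V X F \<rho>)))"
    unfolding apply_sop_diff tr_opmult_diff_r by simp
  then show "Re (tr X (opmult X (ext_op W X M) \<rho>)) \<le> Re (tr X (opmult X (ext_op W X N) (apply_sop V X F \<rho>)))"
    using 1 by linarith
qed

lemma P1:
  assumes "sop_le V F E"
  shows "ref_P V E F"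
  unfolding ref_P_def models_par_def
proof (intro allI impI)
  fix W M N X \<rho>
  assume WMN: "finite W \<and> is_effect W M \<and> is_effect W N"
    and mE: "\<forall>X \<rho>. finite X \<and> V \<union> W \<subseteq> X \<and> is_pdo X \<rho> \<longrightarrow>
           Re (tr X (opmult X (ext_op W X M) \<rho>)) \<le> Re (tr X (opmult X (ext_op W X N) (apply_sop V X E \<rho>)))
            + Re (tr X \<rho>) - Re (tr X (apply_sop V X E \<rho>))"
    and X: "finite X \<and> V \<union> W \<subseteq> X \<and> is_pdo X \<rho>"
  have 1: "Re (tr X (opmult X (ext_op W X M) \<rho>)) \<le> Re (tr X (opmult X (ext_op W X N) (apply_sop V X E \<rho>)))
            + Re (tr X \<rho>) - Re (tr X (apply_sop V X E \<rho>))"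
    using mE X by blast
  have WX: "W \<subseteq> X" using X by auto
  have Nps: "psd X (ext_op W X (\<lambda>s t. idop W s t - N s t))"
    using ext_op_psd[of W X "\<lambda>s t. idop W s t - N s t"] WMN X unfolding is_effect_def psd_iff by auto
  have Gps: "psd X (apply_sop V X (\<lambda>a b c d. E a b c d - F a b c d) \<rho>)"
    using assms X unfolding sop_le_def cp_def is_pdo_def by auto
  have "0 \<le> Re (tr X (opmult X (ext_op W X (\<lambda>s t. idop W s t - N s t)) (apply_sop V X (\<lambda>a b c d. E a b c d - F a b c d) \<rho>)))"
    using trop_key[OF _ Nps Gps] X by blast
  also have "tr X (opmult X (ext_op W X (\<lambda>s t. idop W s t - N s t)) (apply_sop V X (\<lambda>a b c d. E a b c d - F a b c d) \<rho>))
     = (tr X (apply_sop V X E \<rho>) - tr X (apply_sop V X F \<rho>))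
       - (tr X (opmult X (ext_op W X N) (apply_sop V X E \<rho>)) - tr X (opmult X (ext_op W X N) (apply_sop V X F \<rho>)))"
    unfolding ext_op_idop_minus[OF WX] tr_opmult_id_minus[OF conjunct1[OF X]] apply_sop_diff tr_diff tr_opmult_diff_r by (simp add: algebra_simps)
  finally show "Re (tr X (opmult X (ext_op W X M) \<rho>)) \<le> Re (tr X (opmult X (ext_op W X N) (apply_sop V X F \<rho>)))
            + Re (tr X \<rho>) - Re (tr X (apply_sop V X F \<rho>))"
    using 1 by simp
qed

lemma dual_setup:
  assumes "E \<in> DProg V" "finite X" "V \<subseteq> X"
  obtains c Mc Nc where "c > 0" "is_effect X Mc" "is_effect X Nc"
    "Nc = (\<lambda>s t. of_real c * rank1 X \<psi> s t)" "is_op X Mc"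
    "\<And>Y \<rho>. finite Y \<Longrightarrow> X \<subseteq> Y \<Longrightarrow> tr Y (opmult Y (ext_op X Y Mc) \<rho>) = tr Y (opmult Y (ext_op X Y Nc) (apply_sop V Y E \<rho>))"
proof -
  have cpE: "cp V E" using DProgD[OF assms(1)] by blast
  define N0 where "N0 = rank1 X \<psi>"
  define M0 where "M0 = dual V X E N0"
  have N0ps: "psd X N0" unfolding N0_def by (rule R2)
  have M0ps: "psd X M0"
    unfolding psd_iff
  proof
    show "is_op X M0" unfolding M0_def is_op_def dual_def by auto
    show "pos (asgs X) M0" unfolding pos_def
    proof
      fix \<phi>
      have "qf (asgs X) M0 \<phi> = tr X (opmult X M0 (rank1 X \<phi>))" by (rule R1'[symmetric])
      also have "\<dots> = tr X (opmult X N0 (apply_sop V X E (rank1 X \<phi>)))" unfolding M0_def by (rule dual_a)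
      also have "\<dots> = qf (asgs X) (apply_sop V X E (rank1 X \<phi>)) \<psi>" unfolding N0_def by (rule R1)
      finally have e: "qf (asgs X) M0 \<phi> = qf (asgs X) (apply_sop V X E (rank1 X \<phi>)) \<psi>" .
      have "psd X (apply_sop V X E (rank1 X \<phi>))" by (rule cpD[OF cpE assms(2,3) R2])
      then show "Im (qf (asgs X) M0 \<phi>) = 0 \<and> 0 \<le> Re (qf (asgs X) M0 \<phi>)" unfolding e psd_iff pos_def by blast
    qed
  qed
  define SM where "SM = (\<Sum>s\<in>asgs X. \<Sum>t\<in>asgs X. cmod (M0 s t))"
  define SN where "SN = (\<Sum>s\<in>asgs X. \<Sum>t\<in>asgs X. cmod (N0 s t))"
  have SM0: "SM \<ge> 0" and SN0: "SN \<ge> 0" unfolding SM_def SN_def by (auto intro!: sum_nonneg)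
  define c where "c = 1 / (1 + SM + SN)"
  have cpos: "c > 0" unfolding c_def using SM0 SN0 by simp
  have cSM: "c * SM \<le> 1" unfolding c_def using SM0 SN0 by (simp add: field_simps)
  have cSN: "c * SN \<le> 1" unfolding c_def using SM0 SN0 by (simp add: field_simps)
  define Mc where "Mc = (\<lambda>s t. of_real c * M0 s t)"
  define Nc where "Nc = (\<lambda>s t. of_real c * N0 s t)"
  have effM: "is_effect X Mc" unfolding Mc_def using eff[OF M0ps assms(2)] cpos cSM unfolding SM_def by simp
  have effN: "is_effect X Nc" unfolding Nc_def using eff[OF N0ps assms(2)] cpos cSN unfolding SN_def by simp
  have opM: "is_op X Mc" using effM unfolding is_effect_def psd_iff by blast
  have Md: "Mc = dual V X E Nc" unfolding Mc_def Nc_def M0_def dual_scale ..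
  have eq: "tr Y (opmult Y (ext_op X Y Mc) \<rho>) = tr Y (opmult Y (ext_op X Y Nc) (apply_sop V Y E \<rho>))"
    if "finite Y" "X \<subseteq> Y" for Y \<rho>
    unfolding Md dual_b[OF assms(3) that(2,1)] by (rule dual_a)
  show ?thesis
    by (rule that[OF cpos effM effN _ opM eq]) (simp add: Nc_def N0_def)
qed

lemma scaled_pdo:
  assumes "psd X A" "finite X"
  defines "d \<equiv> 1 / (1 + Re (tr X A))"
  shows "is_pdo X (\<lambda>s t. of_real d * A s t)" "d > 0"
proof -
  have t: "Re (tr X A) \<ge> 0" using tr_psd[OF assms(1,2)] by blast
  show "d > 0" unfolding d_def using t by simp
  have "tr X (\<lambda>s t. of_real d * A s t) = of_real d * tr X A"
    unfolding tr_def by (simp add: sum_distrib_left)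
  then have "Re (tr X (\<lambda>s t. of_real d * A s t)) = d * Re (tr X A)" by simp
  also have "\<dots> \<le> 1" unfolding d_def using t by (simp add: field_simps)
  finally show "is_pdo X (\<lambda>s t. of_real d * A s t)"
    unfolding is_pdo_def using psd_scale[OF assms(1)] \<open>d > 0\<close> by simp
qed

lemma Nc_eval:
  assumes "Nc = (\<lambda>s t. of_real c * rank1 X \<psi> s t)"
  shows "tr X (opmult X Nc (apply_sop V X K (\<lambda>s t. of_real d * A s t))) = of_real c * of_real d * qf (asgs X) (apply_sop V X K A) \<psi>"
  unfolding assms tr_opmult_scale_l apply_sop_scale tr_opmult_scale_r R1 by simp

lemma T2:
  assumes "E \<in> DProg V" "F \<in> DProg V" "ref_T V E F"
  shows "sop_le V E F"
  unfolding sop_le_def cp_def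
proof (intro allI impI)
  fix X A assume XA: "finite X \<and> V \<subseteq> X" "psd X A"
  have fX: "finite X" and VX: "V \<subseteq> X" using XA by auto
  have EA: "psd X (apply_sop V X E A)" using cpD DProgD[OF assms(1)] fX VX XA(2) by blast
  have FA: "psd X (apply_sop V X F A)" using cpD DProgD[OF assms(2)] fX VX XA(2) by blast
  show "psd X (apply_sop V X (\<lambda>a b c d. F a b c d - E a b c d) A)"
    unfolding apply_sop_diff psd_iff
  proof
    show "is_op X (\<lambda>s t. apply_sop V X F A s t - apply_sop V X E A s t)"
      using apply_sop_is_op[of X V F A] apply_sop_is_op[of X V E A] unfolding is_op_def by auto
    show "pos (asgs X) (\<lambda>s t. apply_sop V X F A s t - apply_sop V X E A s t)"
      unfolding pos_def qf_diff
    proof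
      fix \<psi>
      obtain c Mc Nc where c: "c > 0" and effM: "is_effect X Mc" and effN: "is_effect X Nc"
        and Nc: "Nc = (\<lambda>s t. of_real c * rank1 X \<psi> s t)" and opM: "is_op X Mc"
        and eq: "\<And>Y \<rho>. finite Y \<Longrightarrow> X \<subseteq> Y \<Longrightarrow> tr Y (opmult Y (ext_op X Y Mc) \<rho>) = tr Y (opmult Y (ext_op X Y Nc) (apply_sop V Y E \<rho>))"
        by (rule dual_setup[OF assms(1) fX VX, of \<psi>], blast)
      have opN: "is_op X Nc" using effN unfolding is_effect_def psd_iff by blast
      have mE: "models_tot V E X Mc Nc" unfolding models_tot_def using eq by auto
      have mF: "models_tot V F X Mc Nc" using assms(3) mE effM effN fX unfolding ref_T_def by blast
      define d where "d = 1 / (1 + Re (tr X A))"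
      have pdo: "is_pdo X (\<lambda>s t. of_real d * A s t)" and d: "d > 0"
        using scaled_pdo[OF XA(2) fX] unfolding d_def by auto
      have "Re (tr X (opmult X (ext_op X X Mc) (\<lambda>s t. of_real d * A s t)))
         \<le> Re (tr X (opmult X (ext_op X X Nc) (apply_sop V X F (\<lambda>s t. of_real d * A s t))))"
        using mF pdo fX VX unfolding models_tot_def by blast
      then have "Re (tr X (opmult X Nc (apply_sop V X E (\<lambda>s t. of_real d * A s t))))
         \<le> Re (tr X (opmult X Nc (apply_sop V X F (\<lambda>s t. of_real d * A s t))))"
        using eq[OF fX order_refl] unfolding ext_op_id[OF opM] ext_op_id[OF opN] by simp
      then have "c * d * Re (qf (asgs X) (apply_sop V X E A) \<psi>) \<le> c * d * Re (qf (asgs X) (apply_sop V X F A) \<psi>)"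
        unfolding Nc_eval[OF Nc] by simp
      then have le: "Re (qf (asgs X) (apply_sop V X E A) \<psi>) \<le> Re (qf (asgs X) (apply_sop V X F A) \<psi>)"
        using c d by (simp add: mult_le_cancel_left_pos)
      have "Im (qf (asgs X) (apply_sop V X E A) \<psi>) = 0" "Im (qf (asgs X) (apply_sop V X F A) \<psi>) = 0"
        using EA FA unfolding psd_iff pos_def by auto
      then show "Im (qf (asgs X) (apply_sop V X F A) \<psi> - qf (asgs X) (apply_sop V X E A) \<psi>) = 0 \<and>
          0 \<le> Re (qf (asgs X) (apply_sop V X F A) \<psi> - qf (asgs X) (apply_sop V X E A) \<psi>)"
        using le by simp
    qed
  qed
qed

lemma effect_compl: "is_effect X M \<Longrightarrow> is_effect X (\<lambda>s t. idop X s t - M s t)"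
  unfolding is_effect_def by simp

lemma P2:
  assumes "E \<in> DProg V" "F \<in> DProg V" "ref_P V E F"
  shows "sop_le V F E"
  unfolding sop_le_def cp_def
proof (intro allI impI)
  fix X A assume XA: "finite X \<and> V \<subseteq> X" "psd X A"
  have fX: "finite X" and VX: "V \<subseteq> X" using XA by auto
  have EA: "psd X (apply_sop V X E A)" using cpD DProgD[OF assms(1)] fX VX XA(2) by blast
  have FA: "psd X (apply_sop V X F A)" using cpD DProgD[OF assms(2)] fX VX XA(2) by blast
  show "psd X (apply_sop V X (\<lambda>a b c d. E a b c d - F a b c d) A)"
    unfolding apply_sop_diff psd_iff
  proof
    show "is_op X (\<lambda>s t. apply_sop V X E A s t - apply_sop V X F A s t)"
      using apply_sop_is_op[of X V F A] apply_sop_is_op[of X V E A] unfolding is_op_def by auto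
    show "pos (asgs X) (\<lambda>s t. apply_sop V X E A s t - apply_sop V X F A s t)"
      unfolding pos_def qf_diff
    proof
      fix \<psi>
      obtain c Mc Nc where c: "c > 0" and effM: "is_effect X Mc" and effN: "is_effect X Nc"
        and Nc: "Nc = (\<lambda>s t. of_real c * rank1 X \<psi> s t)" and opM: "is_op X Mc"
        and eq: "\<And>Y \<rho>. finite Y \<Longrightarrow> X \<subseteq> Y \<Longrightarrow> tr Y (opmult Y (ext_op X Y Mc) \<rho>) = tr Y (opmult Y (ext_op X Y Nc) (apply_sop V Y E \<rho>))"
        by (rule dual_setup[OF assms(1) fX VX, of \<psi>], blast)
      have opN: "is_op X Nc" using effN unfolding is_effect_def psd_iff by blast
      define Mp where "Mp = (\<lambda>s t. idop X s t - Mc s t)"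
      define Np where "Np = (\<lambda>s t. idop X s t - Nc s t)"
      have effMp: "is_effect X Mp" unfolding Mp_def by (rule effect_compl[OF effM])
      have effNp: "is_effect X Np" unfolding Np_def by (rule effect_compl[OF effN])
      have mE: "models_par V E X Mp Np" unfolding models_par_def
      proof (intro allI impI)
        fix Y \<rho> assume Y: "finite Y \<and> V \<union> X \<subseteq> Y \<and> is_pdo Y \<rho>"
        have XY: "X \<subseteq> Y" and fY: "finite Y" using Y by auto
        show "Re (tr Y (opmult Y (ext_op X Y Mp) \<rho>))
           \<le> Re (tr Y (opmult Y (ext_op X Y Np) (apply_sop V Y E \<rho>))) + Re (tr Y \<rho>) - Re (tr Y (apply_sop V Y E \<rho>))"
          unfolding Mp_def Np_def ext_op_idop_minus[OF XY] tr_opmult_id_minus[OF fY] eq[OF fY XY] by simp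
      qed
      have mF: "models_par V F X Mp Np" using assms(3) mE effMp effNp fX unfolding ref_P_def by blast
      define d where "d = 1 / (1 + Re (tr X A))"
      have pdo: "is_pdo X (\<lambda>s t. of_real d * A s t)" and d: "d > 0"
        using scaled_pdo[OF XA(2) fX] unfolding d_def by auto
      have "Re (tr X (opmult X (ext_op X X Mp) (\<lambda>s t. of_real d * A s t)))
         \<le> Re (tr X (opmult X (ext_op X X Np) (apply_sop V X F (\<lambda>s t. of_real d * A s t))))
           + Re (tr X (\<lambda>s t. of_real d * A s t)) - Re (tr X (apply_sop V X F (\<lambda>s t. of_real d * A s t)))"
        using mF pdo fX VX unfolding models_par_def by blast
      then have "Re (tr X (opmult X Nc (apply_sop V X F (\<lambda>s t. of_real d * A s t))))
         \<le> Re (tr X (opmult X Nc (apply_sop V X E (\<lambda>s t. of_real d * A s t))))"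
        using eq[OF fX order_refl] unfolding Mp_def Np_def ext_op_idop_minus[OF order_refl] tr_opmult_id_minus[OF fX]
          ext_op_id[OF opM] ext_op_id[OF opN] by simp
      then have "c * d * Re (qf (asgs X) (apply_sop V X F A) \<psi>) \<le> c * d * Re (qf (asgs X) (apply_sop V X E A) \<psi>)"
        unfolding Nc_eval[OF Nc] by simp
      then have le: "Re (qf (asgs X) (apply_sop V X F A) \<psi>) \<le> Re (qf (asgs X) (apply_sop V X E A) \<psi>)"
        using c d by (simp add: mult_le_cancel_left_pos)
      have "Im (qf (asgs X) (apply_sop V X E A) \<psi>) = 0" "Im (qf (asgs X) (apply_sop V X F A) \<psi>) = 0"
        using EA FA unfolding psd_iff pos_def by auto
      then show "Im (qf (asgs X) (apply_sop V X E A) \<psi> - qf (asgs X) (apply_sop V X F A) \<psi>) = 0 \<and>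
          0 \<le> Re (qf (asgs X) (apply_sop V X E A) \<psi> - qf (asgs X) (apply_sop V X F A) \<psi>)"
        using le by simp
    qed
  qed
qed



lemma apply_sop_VV:
  assumes "s \<in> asgs V" "t \<in> asgs V"
  shows "apply_sop V V K A s t = (\<Sum>s'\<in>asgs V. \<Sum>t'\<in>asgs V. K s t s' t' * A s' t')"
  unfolding apply_sop_def agree_def using assms by (auto intro!: sum.cong simp: restr_id)

lemma Zlem:
  assumes "finite V" "is_sop V E" "is_sop V F"
    "\<And>A. psd V A \<Longrightarrow> \<forall>s\<in>asgs V. \<forall>t\<in>asgs V. apply_sop V V F A s t = apply_sop V V E A s t"
  shows "E = F"
proof (intro ext)
  fix a b c d
  show "E a b c d = F a b c d"
  proof (cases "a \<in> asgs V \<and> b \<in> asgs V \<and> c \<in> asgs V \<and> d \<in> asgs V")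
    case False
    then show ?thesis using assms(2,3) unfolding is_sop_def by auto
  next
    case True
    have fV: "finite (asgs V)" using finite_asgs[OF assms(1)] .
    define H where "H = (\<lambda>x y. F a b x y - E a b x y)"
    have qf0: "qf (asgs V) H \<phi> = 0" for \<phi>
    proof -
      let ?A = "rank1 V (\<lambda>x. cnj (\<phi> x))"
      have "apply_sop V V F ?A a b - apply_sop V V E ?A a b = 0" using assms(4)[OF R2] True by auto
      moreover have "apply_sop V V F ?A a b - apply_sop V V E ?A a b = (\<Sum>s'\<in>asgs V. \<Sum>t'\<in>asgs V. H s' t' * ?A s' t')"
      proof -
        have eF: "apply_sop V V F ?A a b = (\<Sum>s'\<in>asgs V. \<Sum>t'\<in>asgs V. F a b s' t' * ?A s' t')"
          using True by (simp add: apply_sop_VV)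
        have eE: "apply_sop V V E ?A a b = (\<Sum>s'\<in>asgs V. \<Sum>t'\<in>asgs V. E a b s' t' * ?A s' t')"
          using True by (simp add: apply_sop_VV)
        show ?thesis unfolding eF eE H_def by (simp add: sum_subtractf[symmetric] algebra_simps)
      qed
      moreover have "(\<Sum>s'\<in>asgs V. \<Sum>t'\<in>asgs V. H s' t' * ?A s' t') = qf (asgs V) H \<phi>"
        unfolding qf_def rank1_def by (auto intro!: sum.cong simp: mult.commute mult.left_commute)
      ultimately show ?thesis by simp
    qed
    have posH: "pos (asgs V) H" unfolding pos_def using qf0 by simp
    have diag: "H x x = 0" if "x \<in> asgs V" for x using qf_single[OF fV that, of H 1] qf0 by simp
    have "H c d = 0" using pos_zero_row[OF posH fV _ _ diag] True by blast
    then show ?thesis unfolding H_def by simp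
  qed
qed

lemma G_zero:
  assumes "psd V G" "finite V" "\<And>s. s \<in> asgs V \<Longrightarrow> G s s = 0"
  shows "\<forall>s\<in>asgs V. \<forall>t\<in>asgs V. G s t = 0"
proof (intro ballI)
  fix s t assume st: "s \<in> asgs V" "t \<in> asgs V"
  have p: "pos (asgs V) G" using assms(1) unfolding psd_iff by blast
  show "G s t = 0" using pos_zero_row[OF p finite_asgs[OF assms(2)] st] assms(3)[OF st(1)] by blast
qed

lemma antisym:
  assumes "finite V" "E \<in> DProg V" "F \<in> DProg V" "sop_le V E F" "sop_le V F E"
  shows "E = F"
proof (rule Zlem[OF assms(1) conjunct1[OF DProgD[OF assms(2)]] conjunct1[OF DProgD[OF assms(3)]]])
  fix A assume A: "psd V A"
  define G where "G = (\<lambda>s t. apply_sop V V F A s t - apply_sop V V E A s t)"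
  have G: "psd V G" using assms(4) A assms(1) unfolding sop_le_def cp_def G_def apply_sop_diff by blast
  have G': "psd V (\<lambda>s t. apply_sop V V E A s t - apply_sop V V F A s t)"
    using assms(5) A assms(1) unfolding sop_le_def cp_def apply_sop_diff by blast
  have fV: "finite (asgs V)" using finite_asgs[OF assms(1)] .
  have "G s s = 0" if s: "s \<in> asgs V" for s
  proof -
    have 1: "Im (G s s) = 0 \<and> Re (G s s) \<ge> 0" using pos_diag[OF _ fV s] G unfolding psd_iff by blast
    have 2: "Re (apply_sop V V E A s s - apply_sop V V F A s s) \<ge> 0"
      using pos_diag[OF _ fV s] G' unfolding psd_iff by blast
    show ?thesis using 1 2 unfolding G_def by (simp add: complex_eq_iff)
  qed
  then have "\<forall>s\<in>asgs V. \<forall>t\<in>asgs V. G s t = 0" using G_zero[OF G assms(1)] by blast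
  then show "\<forall>s\<in>asgs V. \<forall>t\<in>asgs V. apply_sop V V F A s t = apply_sop V V E A s t"
    unfolding G_def by simp
qed

lemma tp:
  assumes "finite V" "E \<in> DProg V" "F \<in> DProg V" "sop_le V E F" "trace_pres V E" "trace_pres V F"
  shows "E = F"
proof (rule Zlem[OF assms(1) conjunct1[OF DProgD[OF assms(2)]] conjunct1[OF DProgD[OF assms(3)]]])
  fix A assume A: "psd V A"
  define G where "G = (\<lambda>s t. apply_sop V V F A s t - apply_sop V V E A s t)"
  have G: "psd V G" using assms(4) A assms(1) unfolding sop_le_def cp_def G_def apply_sop_diff by blast
  have fV: "finite (asgs V)" using finite_asgs[OF assms(1)] .
  have tF: "tr V (apply_sop V V F A) = tr V A" using assms(6) A unfolding trace_pres_def by blast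
  have tE: "tr V (apply_sop V V E A) = tr V A" using assms(5) A unfolding trace_pres_def by blast
  have trG: "tr V G = 0" unfolding G_def tr_diff tF tE by simp
  have d: "Im (G s s) = 0 \<and> Re (G s s) \<ge> 0" if "s \<in> asgs V" for s
    using pos_diag[OF _ fV that] G unfolding psd_iff by blast
  have "Re (tr V G) = (\<Sum>s\<in>asgs V. Re (G s s))" unfolding tr_def by (rule Re_sum)
  then have "(\<Sum>s\<in>asgs V. Re (G s s)) = 0" using trG by simp
  moreover have "(\<Sum>s\<in>asgs V. Re (G s s)) = 0 \<longleftrightarrow> (\<forall>s\<in>asgs V. Re (G s s) = 0)"
    by (rule sum_nonneg_eq_0_iff[OF fV]) (use d in blast)
  ultimately have "\<forall>s\<in>asgs V. Re (G s s) = 0" by blast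
  then have "G s s = 0" if "s \<in> asgs V" for s using d[OF that] that by (simp add: complex_eq_iff)
  then have "\<forall>s\<in>asgs V. \<forall>t\<in>asgs V. G s t = 0" using G_zero[OF G assms(1)] by blast
  then show "\<forall>s\<in>asgs V. \<forall>t\<in>asgs V. apply_sop V V F A s t = apply_sop V V E A s t"
    unfolding G_def by simp
qed

lemma sop_le_refl: "sop_le V E E"
proof -
  have e: "(\<lambda>a b c d. E a b c d - E a b c d) = (\<lambda>a b c d. 0)" by simp
  show ?thesis unfolding sop_le_def cp_def e apply_sop_zero using psd_zero by blast
qed

theorem theorem4p2:
  fixes V :: "nat set" and E F :: sop
  assumes "finite V" and "E \<in> DProg V" and "F \<in> DProg V"
  shows "(ref_T V E F \<longleftrightarrow> sop_le V E F)
       \<and> (ref_P V E F \<longleftrightarrow> sop_le V F E)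
       \<and> (equiv_T V E F \<longleftrightarrow> equiv_P V E F) \<and> (equiv_P V E F \<longleftrightarrow> E = F)
       \<and> (trace_pres V E \<and> trace_pres V F \<longrightarrow>
            (ref_T V E F \<longleftrightarrow> ref_P V E F) \<and> (ref_P V E F \<longleftrightarrow> E = F))"
proof -
  have T: "ref_T V E F \<longleftrightarrow> sop_le V E F" using T1 T2 assms by blast
  have T': "ref_T V F E \<longleftrightarrow> sop_le V F E" using T1 T2 assms by blast
  have P: "ref_P V E F \<longleftrightarrow> sop_le V F E" using P1 P2 assms by blast
  have P': "ref_P V F E \<longleftrightarrow> sop_le V E F" using P1 P2 assms by blast
  have AS: "sop_le V E F \<and> sop_le V F E \<longleftrightarrow> E = F" using antisym[OF assms] sop_le_refl by blast
  have TP: "(sop_le V E F \<longleftrightarrow> E = F) \<and> (sop_le V F E \<longleftrightarrow> E = F)" if "trace_pres V E \<and> trace_pres V F"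
    using tp[OF assms] tp[OF assms(1,3,2)] that sop_le_refl by metis
  show ?thesis unfolding equiv_T_def equiv_P_def using T T' P P' AS TP by blast
qed

end
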